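(* Let $ABC$ be a triangle with circumcenter $O$, orthocenter $H$, and orthic triangle $A_HB_HC_H$ (the feet of the altitudes from $A, B, C$). Let $A^*, B^*, C^*$ be the feet of the perpendiculars from $O$ to the lines $AH, BH, CH$ respectively. If line $AO$ meets line $B_HC_H$ at $J$, then the orthocenter $H^*$ of triangle $A^*B^*C^*$ lies on line $A_HJ$. *)

theory Defs
  imports "HOL-Analysis.Analysis"
begin

definition is_foot :: "real^2 \<Rightarrow> real^2 \<Rightarrow> real^2 \<Rightarrow> real^2 \<Rightarrow> bool" where
  "is_foot F X P Q \<longleftrightarrow> collinear {P, Q, F} \<and> (X - F) \<bullet> (Q - P) = 0"

definition is_orthocenter :: "real^2 \<Rightarrow> real^2 \<Rightarrow> real^2 \<Rightarrow> real^2 \<Rightarrow> bool" where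
  "is_orthocenter H A B C \<longleftrightarrow>
     (H - A) \<bullet> (B - C) = 0 \<and> (H - B) \<bullet> (C - A) = 0 \<and> (H - C) \<bullet> (A - B) = 0"

definition is_circumcenter :: "real^2 \<Rightarrow> real^2 \<Rightarrow> real^2 \<Rightarrow> real^2 \<Rightarrow> bool" where
  "is_circumcenter P A B C \<longleftrightarrow> dist P A = dist P B \<and> dist P B = dist P C"

end

theory Submission
  imports Defs
begin

lemma inner2: "(x::real^2) \<bullet> y = x$1*y$1 + x$2*y$2"
  by (simp add: inner_vec_def sum_2)

lemma coll0: "collinear {0, x::real^2, y} \<longleftrightarrow> x$1*y$2 = x$2*y$1"
proof
  assume "collinear {0, x, y}"
  then have "x = 0 \<or> y = 0 \<or> (\<exists>c. y = c *\<^sub>R x)" by (simp add: collinear_lemma)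
  then show "x$1*y$2 = x$2*y$1" by auto
next
  assume h: "x$1*y$2 = x$2*y$1"
  show "collinear {0, x, y}"
  proof (cases "x = 0")
    case True then show ?thesis by (simp add: collinear_lemma)
  next
    case False
    then have "x$1 \<noteq> 0 \<or> x$2 \<noteq> 0" by (simp add: vec_eq_iff forall_2)
    then show ?thesis
    proof
      assume x1: "x$1 \<noteq> 0"
      have "y = (y$1/x$1) *\<^sub>R x"
        using x1 h by (simp add: vec_eq_iff forall_2 field_simps)
      then show ?thesis unfolding collinear_lemma by blast
    next
      assume x2: "x$2 \<noteq> 0"
      have "y = (y$2/x$2) *\<^sub>R x"
        using x2 h by (simp add: vec_eq_iff forall_2 field_simps)
      then show ?thesis unfolding collinear_lemma by blast
    qed
  qed
qed

lemma coll3: "collinear {P, Q, R::real^2} \<longleftrightarrow> (P$1-Q$1)*(R$2-Q$2) = (P$2-Q$2)*(R$1-Q$1)"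
  using collinear_3[of P Q R] by (simp add: NO_MATCH_def coll0)

lemma neq2: "(P::real^2) \<noteq> Q \<longleftrightarrow> P$1 \<noteq> Q$1 \<or> P$2 \<noteq> Q$2"
  by (auto simp add: vec_eq_iff forall_2)

lemma dist2: "dist (P::real^2) A = dist P B \<Longrightarrow> (A$1-P$1)^2+(A$2-P$2)^2 = (B$1-P$1)^2+(B$2-P$2)^2"
proof -
  assume "dist P A = dist P B"
  then have "(dist P A)^2 = (dist P B)^2" by simp
  then have "(P - A) \<bullet> (P - A) = (P - B) \<bullet> (P - B)" by (simp add: dist_norm power2_norm_eq_inner)
  then show ?thesis by (simp add: inner2 power2_eq_square algebra_simps)
qed


lemma pp_lem:
  fixes u1 u2 e1 e2 w1 w2 :: real
  assumes "e1 \<noteq> 0 \<or> e2 \<noteq> 0" "u1*e1+u2*e2=0" "w1*e1+w2*e2=0"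
  shows "u1*w2 - u2*w1 = 0"
proof -
  have "e1*(u1*w2-u2*w1)=0" "e2*(u1*w2-u2*w1)=0" using assms(2,3) by algebra+
  then show ?thesis using assms(1) by auto
qed

lemma par_perp:
  fixes u1 u2 e1 e2 w1 w2 :: real
  assumes "e1 \<noteq> 0 \<or> e2 \<noteq> 0" "u1*e2-u2*e1=0" "w1*e1+w2*e2=0"
  shows "u1*w1 + u2*w2 = 0"
proof -
  have "e1*(u1*w1+u2*w2)=0" "e2*(u1*w1+u2*w2)=0" using assms(2,3) by algebra+
  then show ?thesis using assms(1) by auto
qed

lemma uniq_dd:
  fixes d1 d2 u1 u2 e1 e2 :: real
  assumes "d1*u1+d2*u2=0" "d1*e1+d2*e2=0" "u1*e2-u2*e1 \<noteq> 0"
  shows "d1 = 0 \<and> d2 = 0"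
proof -
  have "d1*(u1*e2-u2*e1)=0" "d2*(u1*e2-u2*e1)=0" using assms(1,2) by algebra+
  then show ?thesis using assms(3) by auto
qed

lemma uniq_cd:
  fixes d1 d2 e1 e2 :: real
  assumes "e1 \<noteq> 0 \<or> e2 \<noteq> 0" "d1*e2-d2*e1=0" "d1*e1+d2*e2=0"
  shows "d1 = 0 \<and> d2 = 0"
proof -
  have "d1*(e1^2+e2^2)=0" "d2*(e1^2+e2^2)=0" using assms(2,3) by algebra+
  moreover have "e1^2+e2^2 \<noteq> 0" using assms(1) by (simp add: sum_power2_eq_zero_iff)
  ultimately show ?thesis by auto
qed

lemma side:
  fixes a1 a2 b1 b2 c1 c2 h1 h2 p1 p2 x1 x2 :: real
  assumes bc: "b1^2+b2^2 = c1^2+c2^2"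
    and h: "h1 = a1+b1+c1" "h2 = a2+b2+c2"
    and bcne: "b1 \<noteq> c1 \<or> b2 \<noteq> c2"
    and ahne: "a1 \<noteq> h1 \<or> a2 \<noteq> h2"
    and fc: "(b1-c1)*(p2-c2) = (b2-c2)*(p1-c1)"
    and fd: "(a1-p1)*(c1-b1)+(a2-p2)*(c2-b2)=0"
    and sc: "(a1-h1)*(x2-h2) = (a2-h2)*(x1-h1)"
    and sd: "x1*(h1-a1)+x2*(h2-a2)=0"
  shows "x1 = p1 - (b1+c1)/2 \<and> x2 = p2 - (b2+c2)/2"
proof -
  have v: "c1-b1 \<noteq> 0 \<or> c2-b2 \<noteq> 0" using bcne by auto
  have w: "b1+c1 \<noteq> 0 \<or> b2+c2 \<noteq> 0" using ahne h by auto
  have perp: "(b1+c1)*(c1-b1)+(b2+c2)*(c2-b2) = 0" using bc by algebra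
  have pa: "(a1-p1)*(b2+c2) - (a2-p2)*(b1+c1) = 0"
    using pp_lem[OF v fd perp] .
  have pbc: "(p1-c1)*(b1+c1)+(p2-c2)*(b2+c2) = 0"
    by (rule par_perp[OF v _ perp]) (use fc in algebra)
  have "(x1 - (p1 - (b1+c1)/2)) = 0 \<and> (x2 - (p2 - (b2+c2)/2)) = 0"
  proof (rule uniq_cd[OF w])
    show "(x1 - (p1 - (b1 + c1) / 2)) * (b2 + c2) - (x2 - (p2 - (b2 + c2) / 2)) * (b1 + c1) = 0"
      using sc pa h by algebra
    show "(x1 - (p1 - (b1 + c1) / 2)) * (b1 + c1) + (x2 - (p2 - (b2 + c2) / 2)) * (b2 + c2) = 0"
      using sd pbc h bc by algebra
  qed
  then show ?thesis by simp
qed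

lemma onc:
  fixes a1 a2 h1 h2 x1 x2 :: real
  assumes ahne: "a1 \<noteq> h1 \<or> a2 \<noteq> h2"
    and sc: "(a1-h1)*(x2-h2) = (a2-h2)*(x1-h1)"
    and sd: "x1*(h1-a1)+x2*(h2-a2)=0"
  shows "x1*(x1-h1)+x2*(x2-h2) = 0"
proof -
  have v: "h1-a1 \<noteq> 0 \<or> h2-a2 \<noteq> 0" using ahne by auto
  have "(x1-h1)*x1+(x2-h2)*x2 = 0"
    by (rule par_perp[OF v _ sd]) (use sc in algebra)
  then show ?thesis by algebra
qed

lemma dotq:
  fixes a1 a2 b1 b2 c1 c2 q1 q2 :: real
  assumes ac: "a1^2+a2^2 = c1^2+c2^2"
    and acne: "a1 \<noteq> c1 \<or> a2 \<noteq> c2"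
    and fc: "(c1-a1)*(q2-a2) = (c2-a2)*(q1-a1)"
    and fd: "(b1-q1)*(a1-c1)+(b2-q2)*(a2-c2)=0"
  shows "2*(q1*a1+q2*a2) = (a1^2+a2^2) + (a1*c1+a2*c2) + (a1*b1+a2*b2) - (b1*c1+b2*c2)"
proof -
  have v: "a1-c1 \<noteq> 0 \<or> a2-c2 \<noteq> 0" using acne by auto
  have perp: "(a1+c1)*(a1-c1)+(a2+c2)*(a2-c2) = 0" using ac by algebra
  have "(q1-a1)*(a1+c1)+(q2-a2)*(a2+c2) = 0"
    by (rule par_perp[OF v _ perp]) (use fc in algebra)
  then show ?thesis using fd by algebra
qed


lemma fin:
  fixes R ab ac bc Xb Xc m n pl pp qp rp s :: real
  assumes hXb: "Xb^2 = R^2 - ab^2" and hXc: "Xc^2 = R^2 - ac^2" and hbc: "R*bc = ab*ac + Xb*Xc"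
  and hm: "2*m = R+ab+ac-bc" and hn: "n = R+ab+ac+bc"
  and hq: "qp*(R-ac) = Xc*(R-m)" and hr: "rp*(R-ab) = Xb*(R-m)"
  and hs: "s*(2*(R-bc)) = R+ac-ab-bc" and hpl: "pl = ab + s*(ac-ab)" and hpp: "pp = Xb + s*(Xc-Xb)"
  and n1: "R-ac \<noteq> 0" and n2: "R-ab \<noteq> 0" and n3: "R - bc \<noteq> 0" and n4: "R \<noteq> 0"
  shows "(m - pl)*(qp + rp - 2*(Xb+Xc)) - pp*n = 0"
proof -
  have "R*(R-ac)*(R-ab)*(2*(R-bc))*((m - pl)*(qp + rp - 2*(Xb+Xc)) - pp*n) = 0"
    using hXb hXc hbc hm hn hq hr hs hpl hpp by algebra
  then show ?thesis using n1 n2 n3 n4 by simp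
qed

lemma core_real:
  fixes a1 a2 b1 b2 c1 c2 h1 h2 p1 p2 q1 q2 r1 r2 x1 x2 y1 y2 z1 z2 j1 j2 k1 k2 :: real
  assumes circ: "a1^2+a2^2 = b1^2+b2^2" "b1^2+b2^2 = c1^2+c2^2"
    and tri: "(a1-b1)*(c2-b2) \<noteq> (a2-b2)*(c1-b1)"
    and orth: "(h1-a1)*(b1-c1)+(h2-a2)*(b2-c2)=0" "(h1-b1)*(c1-a1)+(h2-b2)*(c2-a2)=0"
    and fA: "(b1-c1)*(p2-c2) = (b2-c2)*(p1-c1)" "(a1-p1)*(c1-b1)+(a2-p2)*(c2-b2)=0"
    and fB: "(c1-a1)*(q2-a2) = (c2-a2)*(q1-a1)" "(b1-q1)*(a1-c1)+(b2-q2)*(a2-c2)=0"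
    and fC: "(a1-b1)*(r2-b2) = (a2-b2)*(r1-b1)" "(c1-r1)*(b1-a1)+(c2-r2)*(b2-a2)=0"
    and lA: "a1 \<noteq> h1 \<or> a2 \<noteq> h2" and lB: "b1 \<noteq> h1 \<or> b2 \<noteq> h2" and lC: "c1 \<noteq> h1 \<or> c2 \<noteq> h2"
    and sA0: "(a1-h1)*(x2-h2) = (a2-h2)*(x1-h1)" "(0-x1)*(h1-a1)+(0-x2)*(h2-a2)=0"
    and sB0: "(b1-h1)*(y2-h2) = (b2-h2)*(y1-h1)" "(0-y1)*(h1-b1)+(0-y2)*(h2-b2)=0"
    and sC0: "(c1-h1)*(z2-h2) = (c2-h2)*(z1-h1)" "(0-z1)*(h1-c1)+(0-z2)*(h2-c2)=0"
    and BCH: "q1 \<noteq> r1 \<or> q2 \<noteq> r2"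
    and J: "a1*j2 = a2*j1" "(q1-r1)*(j2-r2) = (q2-r2)*(j1-r1)"
    and tri': "(x1-y1)*(z2-y2) \<noteq> (x2-y2)*(z1-y1)"
    and orth': "(k1-x1)*(y1-z1)+(k2-x2)*(y2-z2)=0" "(k1-y1)*(z1-x1)+(k2-y2)*(z2-x2)=0"
  shows "(p1-j1)*(k2-j2) = (p2-j2)*(k1-j1)"
proof -
  have sA: "(a1-h1)*(x2-h2) = (a2-h2)*(x1-h1)" "x1*(h1-a1)+x2*(h2-a2)=0"
  proof -
    show "(a1-h1)*(x2-h2) = (a2-h2)*(x1-h1)" using sA0(1) .
    have "x1*(h1-a1)+x2*(h2-a2) = -((0-x1)*(h1-a1)+(0-x2)*(h2-a2))" by (simp add: algebra_simps)
    then show "x1*(h1-a1)+x2*(h2-a2)=0" using sA0(2) by simp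
  qed
  have sB: "(b1-h1)*(y2-h2) = (b2-h2)*(y1-h1)" "y1*(h1-b1)+y2*(h2-b2)=0"
  proof -
    show "(b1-h1)*(y2-h2) = (b2-h2)*(y1-h1)" using sB0(1) .
    have "y1*(h1-b1)+y2*(h2-b2) = -((0-y1)*(h1-b1)+(0-y2)*(h2-b2))" by (simp add: algebra_simps)
    then show "y1*(h1-b1)+y2*(h2-b2)=0" using sB0(2) by simp
  qed
  have sC: "(c1-h1)*(z2-h2) = (c2-h2)*(z1-h1)" "z1*(h1-c1)+z2*(h2-c2)=0"
  proof -
    show "(c1-h1)*(z2-h2) = (c2-h2)*(z1-h1)" using sC0(1) .
    have "z1*(h1-c1)+z2*(h2-c2) = -((0-z1)*(h1-c1)+(0-z2)*(h2-c2))" by (simp add: algebra_simps)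
    then show "z1*(h1-c1)+z2*(h2-c2)=0" using sC0(2) by simp
  qed
  define R where "R = a1^2+a2^2"
  have hb: "b1^2+b2^2 = R" and hc: "c1^2+c2^2 = R" using circ R_def by auto
  have bcne: "b1 \<noteq> c1 \<or> b2 \<noteq> c2" using tri by auto
  have cane: "c1 \<noteq> a1 \<or> c2 \<noteq> a2" using tri by auto
  have abne: "a1 \<noteq> b1 \<or> a2 \<noteq> b2" using tri by auto
  have Rne: "R \<noteq> 0"
  proof
    assume "R = 0"
    then have "a1 = 0 \<and> a2 = 0" "b1 = 0 \<and> b2 = 0" "c1 = 0 \<and> c2 = 0"
      using R_def hb hc by (simp_all add: sum_power2_eq_zero_iff)
    then show False using tri by auto
  qed
  have "h1-(a1+b1+c1) = 0 \<and> h2-(a2+b2+c2) = 0"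
  proof (rule uniq_dd)
    show "(h1-(a1+b1+c1))*(b1-c1)+(h2-(a2+b2+c2))*(b2-c2) = 0"
      using orth(1) hb hc by algebra
    show "(h1-(a1+b1+c1))*(c1-a1)+(h2-(a2+b2+c2))*(c2-a2) = 0"
      using orth(2) hc R_def by algebra
    have "(b1-c1)*(c2-a2)-(b2-c2)*(c1-a1) = -((a1-b1)*(c2-b2) - (a2-b2)*(c1-b1))" by algebra
    then show "(b1-c1)*(c2-a2)-(b2-c2)*(c1-a1) \<noteq> 0" using tri by simp
  qed
  then have h1: "h1 = a1+b1+c1" and h2: "h2 = a2+b2+c2" by simp_all
  have xo: "x1*(x1-h1)+x2*(x2-h2) = 0" using onc[OF lA sA] .
  have yo: "y1*(y1-h1)+y2*(y2-h2) = 0" using onc[OF lB sB] .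
  have zo: "z1*(z1-h1)+z2*(z2-h2) = 0" using onc[OF lC sC] .
  have "k1-(x1+y1+z1-h1) = 0 \<and> k2-(x2+y2+z2-h2) = 0"
  proof (rule uniq_dd)
    show "(k1-(x1+y1+z1-h1))*(y1-z1)+(k2-(x2+y2+z2-h2))*(y2-z2) = 0"
      using orth'(1) yo zo by algebra
    show "(k1-(x1+y1+z1-h1))*(z1-x1)+(k2-(x2+y2+z2-h2))*(z2-x2) = 0"
      using orth'(2) xo zo by algebra
    have "(y1-z1)*(z2-x2)-(y2-z2)*(z1-x1) = -((x1-y1)*(z2-y2) - (x2-y2)*(z1-y1))" by algebra
    then show "(y1-z1)*(z2-x2)-(y2-z2)*(z1-x1) \<noteq> 0" using tri' by simp
  qed
  then have k1: "k1 = x1+y1+z1-h1" and k2: "k2 = x2+y2+z2-h2" by simp_all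
  have xs: "x1 = p1 - (b1+c1)/2 \<and> x2 = p2 - (b2+c2)/2"
    by (rule side[OF _ h1 h2 bcne lA fA sA]) (use hb hc in simp)
  have ys: "y1 = q1 - (c1+a1)/2 \<and> y2 = q2 - (c2+a2)/2"
  proof (rule side[OF _ _ _ _ lB fB sB])
    show "c1^2+c2^2 = a1^2+a2^2" using hc R_def by simp
    show "h1 = b1+c1+a1" "h2 = b2+c2+a2" using h1 h2 by simp_all
    show "c1 \<noteq> a1 \<or> c2 \<noteq> a2" using cane .
  qed
  have zs: "z1 = r1 - (a1+b1)/2 \<and> z2 = r2 - (a2+b2)/2"
  proof (rule side[OF _ _ _ _ lC fC sC])
    show "a1^2+a2^2 = b1^2+b2^2" using hb R_def by simp
    show "h1 = c1+a1+b1" "h2 = c2+a2+b2" using h1 h2 by simp_all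
    show "a1 \<noteq> b1 \<or> a2 \<noteq> b2" using abne .
  qed
  define m where "m = (R + (a1*c1+a2*c2) + (a1*b1+a2*b2) - (b1*c1+b2*c2))/2"
  have qa: "q1*a1+q2*a2 = m"
  proof -
    have "2*(q1*a1+q2*a2) = (a1^2+a2^2) + (a1*c1+a2*c2) + (a1*b1+a2*b2) - (b1*c1+b2*c2)"
      by (rule dotq[OF _ _ fB]) (use hc R_def cane in auto)
    then show ?thesis unfolding m_def R_def by simp
  qed
  have ra: "r1*a1+r2*a2 = m"
  proof -
    have "2*(r1*a1+r2*a2) = (a1^2+a2^2) + (a1*b1+a2*b2) + (a1*c1+a2*c2) - (c1*b1+c2*b2)"
    proof (rule dotq)
      show "a1^2+a2^2 = b1^2+b2^2" using hb R_def by simp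
      show "a1 \<noteq> b1 \<or> a2 \<noteq> b2" using abne .
      show "(b1-a1)*(r2-a2) = (b2-a2)*(r1-a1)" using fC(1) by algebra
      show "(c1-r1)*(a1-b1)+(c2-r2)*(a2-b2)=0" using fC(2) by algebra
    qed
    then show ?thesis unfolding m_def R_def by (simp add: algebra_simps)
  qed
  have ja: "j1*a1+j2*a2 = m"
  proof -
    have v: "q1-r1 \<noteq> 0 \<or> q2-r2 \<noteq> 0" using BCH by auto
    have "(j1-r1)*a1+(j2-r2)*a2 = 0"
    proof (rule par_perp[OF v])
      show "(j1-r1)*(q2-r2)-(j2-r2)*(q1-r1) = 0" using J(2) by (simp add: mult.commute)
      show "a1*(q1-r1)+a2*(q2-r2) = 0" using qa ra by (simp add: algebra_simps)
    qed
    then show ?thesis using ra by algebra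
  qed
  define s where "s = ((p1-b1)*(c1-b1)+(p2-b2)*(c2-b2))/((c1-b1)^2+(c2-b2)^2)"
  have "(p1-b1-s*(c1-b1)) = 0 \<and> (p2-b2-s*(c2-b2)) = 0"
  proof (rule uniq_cd)
    show v: "c1-b1 \<noteq> 0 \<or> c2-b2 \<noteq> 0" using bcne by auto
    show "(p1-b1-s*(c1-b1))*(c2-b2) - (p2-b2-s*(c2-b2))*(c1-b1) = 0" using fA(1) by algebra
    have nz: "(c1-b1)^2+(c2-b2)^2 \<noteq> 0" using v by (simp add: sum_power2_eq_zero_iff)
    have "s*((c1-b1)^2+(c2-b2)^2) = (p1-b1)*(c1-b1)+(p2-b2)*(c2-b2)"
      unfolding s_def using nz by simp
    then show "(p1-b1-s*(c1-b1))*(c1-b1) + (p2-b2-s*(c2-b2))*(c2-b2) = 0" by algebra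
  qed
  then have p1: "p1 = b1 + s*(c1-b1)" and p2: "p2 = b2 + s*(c2-b2)" by simp_all
  have n1: "R-(a1*c1+a2*c2) \<noteq> 0"
  proof -
    have "2*(R-(a1*c1+a2*c2)) = (a1-c1)^2+(a2-c2)^2" using hc R_def by algebra
    moreover have "(a1-c1)^2+(a2-c2)^2 \<noteq> 0" using cane by (auto simp add: sum_power2_eq_zero_iff)
    ultimately show ?thesis by auto
  qed
  have n2: "R-(a1*b1+a2*b2) \<noteq> 0"
  proof -
    have "2*(R-(a1*b1+a2*b2)) = (a1-b1)^2+(a2-b2)^2" using hb R_def by algebra
    moreover have "(a1-b1)^2+(a2-b2)^2 \<noteq> 0" using abne by (auto simp add: sum_power2_eq_zero_iff)
    ultimately show ?thesis by auto
  qed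
  have n3: "R-(b1*c1+b2*c2) \<noteq> 0"
  proof -
    have "(b1-c1)^2+(b2-c2)^2 = (b1^2+b2^2) + (c1^2+c2^2) - 2*(b1*c1+b2*c2)" by algebra
    then have "2*(R-(b1*c1+b2*c2)) = (b1-c1)^2+(b2-c2)^2" using hb hc by (smt (verit))
    moreover have "(b1-c1)^2+(b2-c2)^2 \<noteq> 0" using bcne by (auto simp add: sum_power2_eq_zero_iff)
    ultimately show ?thesis by auto
  qed
  have F: "(m - (p1*a1+p2*a2))*((a1*q2-a2*q1) + (a1*r2-a2*r1) - 2*((a1*b2-a2*b1)+(a1*c2-a2*c1)))
      - (a1*p2-a2*p1)*(R+(a1*b1+a2*b2)+(a1*c1+a2*c2)+(b1*c1+b2*c2)) = 0"
  proof (rule fin[OF _ _ _ _ refl _ _ _ _ _ n1 n2 n3 Rne])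
    show "(a1*b2-a2*b1)^2 = R^2 - (a1*b1+a2*b2)^2" using hb R_def by algebra
    show "(a1*c2-a2*c1)^2 = R^2 - (a1*c1+a2*c2)^2" using hc R_def by algebra
    show "R*(b1*c1+b2*c2) = (a1*b1+a2*b2)*(a1*c1+a2*c2) + (a1*b2-a2*b1)*(a1*c2-a2*c1)"
      using R_def by algebra
    show "2*m = R+(a1*b1+a2*b2)+(a1*c1+a2*c2)-(b1*c1+b2*c2)" using m_def by simp
    show "(a1*q2-a2*q1)*(R-(a1*c1+a2*c2)) = (a1*c2-a2*c1)*(R-m)"
      using fB(1) qa R_def hc by algebra
    show "(a1*r2-a2*r1)*(R-(a1*b1+a2*b2)) = (a1*b2-a2*b1)*(R-m)"
      using fC(1) ra R_def hb by algebra
    show "s*(2*(R-(b1*c1+b2*c2))) = R+(a1*c1+a2*c2)-(a1*b1+a2*b2)-(b1*c1+b2*c2)"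
      using fA(2) p1 p2 hb hc R_def by algebra
    show "p1*a1+p2*a2 = (a1*b1+a2*b2) + s*((a1*c1+a2*c2)-(a1*b1+a2*b2))"
      using p1 p2 by algebra
    show "a1*p2-a2*p1 = (a1*b2-a2*b1) + s*((a1*c2-a2*c1)-(a1*b2-a2*b1))"
      using p1 p2 by algebra
  qed
  have K1: "k1 - p1 = q1 + r1 - 2*(a1+b1+c1)" using k1 h1 xs[THEN conjunct1] ys[THEN conjunct1] zs[THEN conjunct1] by (simp add: field_simps)
  have K2: "k2 - p2 = q2 + r2 - 2*(a2+b2+c2)" using k2 h2 xs[THEN conjunct2] ys[THEN conjunct2] zs[THEN conjunct2] by (simp add: field_simps)
  have fr: "R*((j1-p1)*(k2-p2) - (j2-p2)*(k1-p1)) =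
     ((j1-p1)*a1+(j2-p2)*a2)*(a1*(k2-p2)-a2*(k1-p1)) - (a1*(j2-p2)-a2*(j1-p1))*((k1-p1)*a1+(k2-p2)*a2)"
    unfolding R_def by algebra
  have e1: "(j1-p1)*a1+(j2-p2)*a2 = m - (p1*a1+p2*a2)" using ja by (simp add: algebra_simps)
  have e2: "a1*(k2-p2)-a2*(k1-p1) = (a1*q2-a2*q1) + (a1*r2-a2*r1) - 2*((a1*b2-a2*b1)+(a1*c2-a2*c1))"
    unfolding K1 K2 by algebra
  have e3: "a1*(j2-p2)-a2*(j1-p1) = -(a1*p2-a2*p1)"
  proof -
    have "a1*(j2-p2)-a2*(j1-p1) = (a1*j2 - a2*j1) -(a1*p2-a2*p1)" by (simp add: algebra_simps)
    then show ?thesis using J(1) by simp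
  qed
  have e4: "(k1-p1)*a1+(k2-p2)*a2 = -(R+(a1*b1+a2*b2)+(a1*c1+a2*c2)+(b1*c1+b2*c2))"
  proof -
    have "(k1-p1)*a1+(k2-p2)*a2 = (q1*a1+q2*a2) + (r1*a1+r2*a2) - 2*(R + (a1*b1+a2*b2) + (a1*c1+a2*c2))"
      unfolding K1 K2 R_def by algebra
    also have "\<dots> = 2*m - 2*(R + (a1*b1+a2*b2) + (a1*c1+a2*c2))" using qa ra by simp
    also have "\<dots> = -(R+(a1*b1+a2*b2)+(a1*c1+a2*c2)+(b1*c1+b2*c2))" unfolding m_def by simp
    finally show ?thesis .
  qed
  have "R*((j1-p1)*(k2-p2) - (j2-p2)*(k1-p1)) = 0"
    unfolding fr e1 e2 e3 e4 using F by (simp add: algebra_simps)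
  then have "(j1-p1)*(k2-p2) - (j2-p2)*(k1-p1) = 0" using Rne by simp
  then show ?thesis by algebra
qed


lemma zero_diff_o: "0 - ((x::real) - t) = t - x" by simp
lemma eq_o: "((x::real) - t = y - t) = (x = y)" by simp
lemma diff_cancel_o: "((x::real) - t) - (y - t) = x - y" by simp

theorem lemma4p1:
  fixes A B C Oc H A\<^sub>H B\<^sub>H C\<^sub>H A' B' C' J H' :: "real^2"
  assumes tri: "\<not> collinear {A, B, C}"
    and circ: "is_circumcenter Oc A B C"
    and orth: "is_orthocenter H A B C"
    and feetA: "is_foot A\<^sub>H A B C"
    and feetB: "is_foot B\<^sub>H B C A"
    and feetC: "is_foot C\<^sub>H C A B"
    and lines: "A \<noteq> H" "B \<noteq> H" "C \<noteq> H"
    and starA: "is_foot A' Oc A H"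
    and starB: "is_foot B' Oc B H"
    and starC: "is_foot C' Oc C H"
    and BCH: "B\<^sub>H \<noteq> C\<^sub>H"
    and J: "collinear {A, Oc, J}" "collinear {B\<^sub>H, C\<^sub>H, J}"
    and tri': "\<not> collinear {A', B', C'}"
    and orth': "is_orthocenter H' A' B' C'"
  shows "collinear {A\<^sub>H, J, H'}"
proof -
  note defs = is_foot_def is_orthocenter_def is_circumcenter_def coll3 inner2 neq2
  have c1: "(A$1-Oc$1)^2+(A$2-Oc$2)^2 = (B$1-Oc$1)^2+(B$2-Oc$2)^2"
    using circ unfolding is_circumcenter_def by (intro dist2) simp
  have c2: "(B$1-Oc$1)^2+(B$2-Oc$2)^2 = (C$1-Oc$1)^2+(C$2-Oc$2)^2"
    using circ unfolding is_circumcenter_def by (intro dist2) simp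
  have tri0: "(A$1-B$1)*(C$2-B$2) \<noteq> (A$2-B$2)*(C$1-B$1)" using tri by (simp add: coll3)
  have tri0': "(A'$1-B'$1)*(C'$2-B'$2) \<noteq> (A'$2-B'$2)*(C'$1-B'$1)" using tri' by (simp add: coll3)
  have o: "(H$1-A$1)*(B$1-C$1)+(H$2-A$2)*(B$2-C$2)=0" "(H$1-B$1)*(C$1-A$1)+(H$2-B$2)*(C$2-A$2)=0"
    using orth by (simp_all add: defs)
  have o': "(H'$1-A'$1)*(B'$1-C'$1)+(H'$2-A'$2)*(B'$2-C'$2)=0" "(H'$1-B'$1)*(C'$1-A'$1)+(H'$2-B'$2)*(C'$2-A'$2)=0"
    using orth' by (simp_all add: defs)
  have fA: "(B$1-C$1)*(A\<^sub>H$2-C$2) = (B$2-C$2)*(A\<^sub>H$1-C$1)" "(A$1-A\<^sub>H$1)*(C$1-B$1)+(A$2-A\<^sub>H$2)*(C$2-B$2)=0"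
    using feetA by (simp_all add: defs)
  have fB: "(C$1-A$1)*(B\<^sub>H$2-A$2) = (C$2-A$2)*(B\<^sub>H$1-A$1)" "(B$1-B\<^sub>H$1)*(A$1-C$1)+(B$2-B\<^sub>H$2)*(A$2-C$2)=0"
    using feetB by (simp_all add: defs)
  have fC: "(A$1-B$1)*(C\<^sub>H$2-B$2) = (A$2-B$2)*(C\<^sub>H$1-B$1)" "(C$1-C\<^sub>H$1)*(B$1-A$1)+(C$2-C\<^sub>H$2)*(B$2-A$2)=0"
    using feetC by (simp_all add: defs)
  have sA: "(A$1-H$1)*(A'$2-H$2) = (A$2-H$2)*(A'$1-H$1)" "(Oc$1-A'$1)*(H$1-A$1)+(Oc$2-A'$2)*(H$2-A$2)=0"
    using starA by (simp_all add: defs)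
  have sB: "(B$1-H$1)*(B'$2-H$2) = (B$2-H$2)*(B'$1-H$1)" "(Oc$1-B'$1)*(H$1-B$1)+(Oc$2-B'$2)*(H$2-B$2)=0"
    using starB by (simp_all add: defs)
  have sC: "(C$1-H$1)*(C'$2-H$2) = (C$2-H$2)*(C'$1-H$1)" "(Oc$1-C'$1)*(H$1-C$1)+(Oc$2-C'$2)*(H$2-C$2)=0"
    using starC by (simp_all add: defs)
  have l: "A$1 \<noteq> H$1 \<or> A$2 \<noteq> H$2" "B$1 \<noteq> H$1 \<or> B$2 \<noteq> H$2" "C$1 \<noteq> H$1 \<or> C$2 \<noteq> H$2"
    using lines by (simp_all add: neq2)
  have bch: "B\<^sub>H$1 \<noteq> C\<^sub>H$1 \<or> B\<^sub>H$2 \<noteq> C\<^sub>H$2" using BCH by (simp add: neq2)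
  have j: "(A$1-Oc$1)*(J$2-Oc$2) = (A$2-Oc$2)*(J$1-Oc$1)" "(B\<^sub>H$1-C\<^sub>H$1)*(J$2-C\<^sub>H$2) = (B\<^sub>H$2-C\<^sub>H$2)*(J$1-C\<^sub>H$1)"
    using J by (simp_all add: coll3)
  have "((A\<^sub>H$1-Oc$1)-(J$1-Oc$1))*((H'$2-Oc$2)-(J$2-Oc$2)) = ((A\<^sub>H$2-Oc$2)-(J$2-Oc$2))*((H'$1-Oc$1)-(J$1-Oc$1))"
    apply (rule core_real[where ?a1.0 = "A$1-Oc$1" and ?a2.0 = "A$2-Oc$2" and ?b1.0 = "B$1-Oc$1" and ?b2.0 = "B$2-Oc$2" and ?c1.0 = "C$1-Oc$1" and ?c2.0 = "C$2-Oc$2" and ?h1.0 = "H$1-Oc$1" and ?h2.0 = "H$2-Oc$2" and ?p1.0 = "A\<^sub>H$1-Oc$1" and ?p2.0 = "A\<^sub>H$2-Oc$2" and ?q1.0 = "B\<^sub>H$1-Oc$1" and ?q2.0 = "B\<^sub>H$2-Oc$2" and ?r1.0 = "C\<^sub>H$1-Oc$1" and ?r2.0 = "C\<^sub>H$2-Oc$2" and ?x1.0 = "A'$1-Oc$1" and ?x2.0 = "A'$2-Oc$2" and ?y1.0 = "B'$1-Oc$1" and ?y2.0 = "B'$2-Oc$2" and ?z1.0 = "C'$1-Oc$1" and ?z2.0 = "C'$2-Oc$2" and ?j1.0 = "J$1-Oc$1" and ?j2.0 = "J$2-Oc$2" and ?k1.0 = "H'$1-Oc$1" and ?k2.0 =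 "H'$2-Oc$2"])
    apply (simp_all only: diff_cancel_o zero_diff_o eq_o)
    apply (fact c1 c2 tri0 tri0' o o' fA fB fC sA sB sC l bch j)+
    done
  then show ?thesis by (simp add: coll3)
qed

end
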